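(* Let $G=(V,E)$ be a planar graph with a fixed planar embedding, let $c,\delta,\varepsilon\in(0,1)$, let $k\ge1$ be an integer, and let $\ell$ be an integer with $\ell\ge 2k\delta^{-1}+2\varepsilon^{-1}-1$. Then for any $c$-maximum independent sets $S_1,\dots,S_k$ of $G$ there exists $p\in\{0,1,\dots,\ell\}$ such that simultaneously (i) $|S_h\cap L^p|\le(\delta/2)|S_h|$ for all $h\in[k]$, and (ii) $\sum_{i\ne j}|(S_i\cap L^p)\Delta(S_j\cap L^p)|\le(\varepsilon/2)\sum_{i\ne j}|S_i\Delta S_j|$.
   Context: Levels of vertices of an embedded planar graph: a vertex is at level 1 if it lies on the exterior face; inductively, vertices on the exterior face of the graph obtained after deleting all vertices of levels $1,\dots,i-1$ are at level $i$. For an integer $\ell\ge 0$ and $p\in\{0,\dots,\ell\}$, the $p$-th stratum $L^p$ is the set of vertices whose level is congruent to $p$ modulo $\ell+1$. A $c$-maximum independent set is an independent set $S$ with $|S|\ge c$ times the maximum size of an independent set of $G$. *)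

theory Defs
  imports Complex_Main
begin

definition simple_graph :: "'a set \<Rightarrow> ('a \<Rightarrow> 'a \<Rightarrow> bool) \<Rightarrow> bool" where
  "simple_graph V E \<longleftrightarrow> finite V \<and> (\<forall>u v. E u v \<longrightarrow> u \<in> V \<and> v \<in> V)
     \<and> (\<forall>u v. E u v \<longrightarrow> E v u) \<and> (\<forall>v. \<not> E v v)"

definition independent_set :: "'a set \<Rightarrow> ('a \<Rightarrow> 'a \<Rightarrow> bool) \<Rightarrow> 'a set \<Rightarrow> bool" where
  "independent_set V E S \<longleftrightarrow> S \<subseteq> V \<and> (\<forall>u\<in>S. \<forall>v\<in>S. \<not> E u v)"

definition indep_number :: "'a set \<Rightarrow> ('a \<Rightarrow> 'a \<Rightarrow> bool) \<Rightarrow> nat" where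
  "indep_number V E = Max (card ` {S. independent_set V E S})"

definition c_max_independent_set :: "real \<Rightarrow> 'a set \<Rightarrow> ('a \<Rightarrow> 'a \<Rightarrow> bool) \<Rightarrow> 'a set \<Rightarrow> bool" where
  "c_max_independent_set c V E S \<longleftrightarrow>
     independent_set V E S \<and> real (card S) \<ge> c * real (indep_number V E)"

definition stratum :: "'a set \<Rightarrow> ('a \<Rightarrow> nat) \<Rightarrow> nat \<Rightarrow> nat \<Rightarrow> 'a set" where
  "stratum V lvl l p = {v \<in> V. lvl v mod (l + 1) = p}"

definition symdiff :: "'a set \<Rightarrow> 'a set \<Rightarrow> 'a set" where
  "symdiff A B = (A - B) \<union> (B - A)"

end

theory Submission
  imports Defs
begin

lemma strata_sum:
  assumes "finite V" "A \<subseteq> V"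
  shows "(\<Sum>p\<in>{0..l}. card (A \<inter> stratum V lvl l p)) = card A"
proof -
  have eq: "A = (\<Union>p\<in>{0..l}. A \<inter> stratum V lvl l p)"
  proof
    show "A \<subseteq> (\<Union>p\<in>{0..l}. A \<inter> stratum V lvl l p)"
    proof
      fix v assume v: "v \<in> A"
      have "lvl v mod (l+1) \<in> {0..l}" by (simp add: less_Suc_eq_le)
      with v assms(2) show "v \<in> (\<Union>p\<in>{0..l}. A \<inter> stratum V lvl l p)"
        unfolding stratum_def by blast
    qed
  qed auto
  have fin: "finite A" using assms finite_subset by blast
  have "card (\<Union>p\<in>{0..l}. A \<inter> stratum V lvl l p) = (\<Sum>p\<in>{0..l}. card (A \<inter> stratum V lvl l p))"
    by (rule card_UN_disjoint) (use fin in \<open>auto simp: stratum_def\<close>)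
  with eq show ?thesis by simp
qed

lemma few_bad:
  fixes f :: "nat \<Rightarrow> real"
  assumes "finite P" "\<forall>p\<in>P. f p \<ge> 0" "sum f P \<le> T" "a > 0"
  shows "real (card {p\<in>P. f p > a*T}) < 1/a"
proof (cases "{p\<in>P. f p > a*T} = {}")
  case True then have "card {p\<in>P. f p > a*T} = 0" by (simp only: card.empty)
  then show ?thesis using assms(4) by (simp del: Collect_empty_eq)
next
  case False
  let ?B = "{p\<in>P. f p > a*T}"
  have fB: "finite ?B" using assms by simp
  have "(\<Sum>p\<in>?B. a*T) < sum f ?B"
    by (rule sum_strict_mono_ex1) (use fB False in auto)
  also have "\<dots> \<le> sum f P"
    by (rule sum_mono2) (use assms in auto)
  finally have "real (card ?B) * (a*T) < T" using assms by simp
  moreover have "T \<ge> 0" using assms sum_nonneg[of P f] by auto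
  ultimately have "T > 0" "real (card ?B) * a * T < 1 * T"
    by (auto simp: mult.assoc) (smt (verit) mult_nonneg_nonneg of_nat_0_le_iff assms(4))
  then have "real (card ?B) * a < 1" by (meson mult_less_cancel_right_pos)
  thus ?thesis using assms(4) by (simp add: field_simps)
qed

lemma symdiff_inter: "symdiff (A \<inter> L) (B \<inter> L) = symdiff A B \<inter> L"
  unfolding symdiff_def by blast

theorem mainTheorem4:
  fixes V :: "'a set" and E :: "'a \<Rightarrow> 'a \<Rightarrow> bool" and lvl :: "'a \<Rightarrow> nat"
    and c \<delta> \<epsilon> :: real and k l :: nat and S :: "nat \<Rightarrow> 'a set"
  assumes "simple_graph V E"
    and "\<forall>v\<in>V. lvl v \<ge> 1"
    and "0 < c" "c < 1" "0 < \<delta>" "\<delta> < 1" "0 < \<epsilon>" "\<epsilon> < 1"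
    and "k \<ge> 1"
    and "real l \<ge> 2 * real k / \<delta> + 2 / \<epsilon> - 1"
    and "\<forall>h\<in>{1..k}. c_max_independent_set c V E (S h)"
  shows "\<exists>p\<in>{0..l}.
     (\<forall>h\<in>{1..k}. real (card (S h \<inter> stratum V lvl l p)) \<le> (\<delta> / 2) * real (card (S h)))
   \<and> real (\<Sum>(i,j)\<in>{(i,j). i \<in> {1..k} \<and> j \<in> {1..k} \<and> i \<noteq> j}.
           card (symdiff (S i \<inter> stratum V lvl l p) (S j \<inter> stratum V lvl l p)))
     \<le> (\<epsilon> / 2) * real (\<Sum>(i,j)\<in>{(i,j). i \<in> {1..k} \<and> j \<in> {1..k} \<and> i \<noteq> j}.
           card (symdiff (S i) (S j)))"
proof -
  let ?L = "stratum V lvl l"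
  let ?I = "{(i,j). i \<in> {1..k} \<and> j \<in> {1..k} \<and> i \<noteq> j}"
  define Dp where "Dp p = real (\<Sum>(i,j)\<in>?I. card (symdiff (S i \<inter> ?L p) (S j \<inter> ?L p)))" for p
  define D where "D = real (\<Sum>(i,j)\<in>?I. card (symdiff (S i) (S j)))"
  have finV: "finite V" using assms(1) by (simp add: simple_graph_def)
  have SV: "S h \<subseteq> V" if "h \<in> {1..k}" for h
    using assms(11) that by (simp add: c_max_independent_set_def independent_set_def)
  have finI: "finite ?I"
    by (rule finite_subset[of _ "{1..k} \<times> {1..k}"]) auto
  have sumD: "(\<Sum>p\<in>{0..l}. Dp p) = D"
  proof -
    have "(\<Sum>p\<in>{0..l}. Dp p) = real (\<Sum>p\<in>{0..l}. \<Sum>(i,j)\<in>?I. card (symdiff (S i) (S j) \<inter> ?L p))"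
      unfolding Dp_def by (simp add: symdiff_inter)
    also have "\<dots> = real (\<Sum>(i,j)\<in>?I. \<Sum>p\<in>{0..l}. card (symdiff (S i) (S j) \<inter> ?L p))"
      by (subst sum.swap) (simp add: case_prod_beta)
    also have "\<dots> = D" unfolding D_def
    proof (intro arg_cong[where f=real] sum.cong refl)
      fix x assume x: "x \<in> ?I"
      obtain i j where ij: "x = (i,j)" by fastforce
      have "symdiff (S i) (S j) \<subseteq> V" using SV x ij unfolding symdiff_def by auto
      then show "(case x of (i,j) \<Rightarrow> \<Sum>p\<in>{0..l}. card (symdiff (S i) (S j) \<inter> ?L p))
          = (case x of (i,j) \<Rightarrow> card (symdiff (S i) (S j)))"
        using ij strata_sum[OF finV] by simp
    qed
    finally show ?thesis .
  qed
  define B0 where "B0 = {p\<in>{0..l}. Dp p > (\<epsilon>/2) * D}"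
  define B where "B h = {p\<in>{0..l}. (\<lambda>p. real (card (S h \<inter> ?L p))) p > (\<delta>/2) * real (card (S h))}" for h
  have cB0: "real (card B0) < 1/(\<epsilon>/2)"
    unfolding B0_def by (rule few_bad) (use sumD assms(7) in \<open>auto simp: Dp_def intro: sum_nonneg\<close>)
  
  have cB: "real (card (B h)) \<le> 2/\<delta>" if "h \<in> {1..k}" for h
  proof -
    have "real (card (B h)) < 1/(\<delta>/2)"
      unfolding B_def
    proof (rule few_bad)
      show "(\<Sum>p\<in>{0..l}. real (card (S h \<inter> ?L p))) \<le> real (card (S h))"
        using strata_sum[OF finV SV[OF that]]
        by (metis of_nat_sum order_refl)
    qed (use assms(5) in auto)
    thus ?thesis by simp
  qed
  have "real (card (\<Union>h\<in>{1..k}. B h)) \<le> real (\<Sum>h\<in>{1..k}. card (B h))"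
    using card_UN_le[of "{1..k}" B] by (simp only: of_nat_le_iff finite_atLeastAtMost)
  also have "\<dots> = (\<Sum>h\<in>{1..k}. real (card (B h)))" by simp
  also have "\<dots> \<le> (\<Sum>h\<in>{1..k}. 2/\<delta>)" by (rule sum_mono) (use cB in auto)
  also have "\<dots> = 2 * real k / \<delta>" by simp
  finally have cU: "real (card (\<Union>h\<in>{1..k}. B h)) \<le> 2 * real k / \<delta>" .
  have "card (B0 \<union> (\<Union>h\<in>{1..k}. B h)) \<le> card B0 + card (\<Union>h\<in>{1..k}. B h)"
    by (rule card_Un_le)
  hence "real (card (B0 \<union> (\<Union>h\<in>{1..k}. B h))) < real (card {0..l})"
    using cB0 cU assms(10) by simp
  moreover have "finite (B0 \<union> (\<Union>h\<in>{1..k}. B h))" unfolding B0_def B_def by auto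
  ultimately have "\<not> {0..l} \<subseteq> B0 \<union> (\<Union>h\<in>{1..k}. B h)"
    using card_mono[of "B0 \<union> (\<Union>h\<in>{1..k}. B h)" "{0..l}"] by linarith
  then obtain p where p: "p \<in> {0..l}" "p \<notin> B0" "\<forall>h\<in>{1..k}. p \<notin> B h" by blast
  show ?thesis
    apply (rule bexI[OF _ p(1)])
    using p unfolding B0_def B_def Dp_def D_def by (auto simp: not_less)
qed

end
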